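(* A cyclic graph without a dominated vertex is isomorphic (as a directed graph) to $\overrightarrow{C_n^k}$ for some integers $0\le k<\frac12 n$. Consequently, every cyclic graph dismantles to an induced subgraph of the form $\overrightarrow{C_n^k}$.
   Context: A directed graph is a finite pair $(V,E)$, $E\subseteq V\times V$, with no loops and never both $(v,w),(w,v)\in E$; write $v\to w$. A cyclic graph is a directed graph whose vertices are arranged in a cyclic order $v_0\prec v_1\prec\cdots\prec v_{n-1}$ (indices mod $n$) such that whenever $v_i\to v_j$, either $j=i+1$ or both $v_i\to v_{j-1}$ and $v_{i+1}\to v_j$. For a vertex $v$, $N^-(\overrightarrow G,v)=\{w:w\to v\}$ and $N^-[\overrightarrow G,v]=N^-(\overrightarrow G,v)\cup\{v\}$. A vertex $v_i$ is dominated (by $v_{i+1}$) if $N^-(\overrightarrow G,v_{i+1})=N^-[\overrightarrow G,v_i]$. A cyclic graph $\overrightarrow G$ dismantles to an induced subgraph $\overrightarrow H$ if there is a sequence $\overrightarrow G=\overrightarrow G_0,\dots,\overrightarrow G_s=\overrightarrow H$ where each $\overrightarrow G_i$ is obtained from $\overrightarrow G_{i-1}$ (with the inherited cyclic order) by removing a dominated vertex. For integers $0\le k<n/2$, $\overrightarrow{C_n^k}$ is the directed graph on $\{0,\dots,n-1\}$ with $i\to j$ iff $0<(j-i)\bmod n\le k$. *)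

theory Defs
  imports Main
begin

definition digraph :: "'a set \<Rightarrow> ('a \<times> 'a) set \<Rightarrow> bool" where
  "digraph V E \<longleftrightarrow> finite V \<and> E \<subseteq> V \<times> V \<and> (\<forall>v. (v, v) \<notin> E)
     \<and> (\<forall>v w. (v, w) \<in> E \<longrightarrow> (w, v) \<notin> E)"

definition cyclic_graph :: "'a list \<Rightarrow> ('a \<times> 'a) set \<Rightarrow> bool" where
  "cyclic_graph vs E \<longleftrightarrow> distinct vs \<and> digraph (set vs) E \<and>
     (\<forall>i < length vs. \<forall>j < length vs. (vs ! i, vs ! j) \<in> E \<longrightarrow>
        j = (i + 1) mod length vs \<or>
        ((vs ! i, vs ! ((j + length vs - 1) mod length vs)) \<in> E \<and>
         (vs ! ((i + 1) mod length vs), vs ! j) \<in> E))"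

definition in_nbr :: "('a \<times> 'a) set \<Rightarrow> 'a \<Rightarrow> 'a set" where
  "in_nbr E v = {w. (w, v) \<in> E}"

definition closed_in_nbr :: "('a \<times> 'a) set \<Rightarrow> 'a \<Rightarrow> 'a set" where
  "closed_in_nbr E v = insert v (in_nbr E v)"

definition dominated :: "'a list \<Rightarrow> ('a \<times> 'a) set \<Rightarrow> nat \<Rightarrow> bool" where
  "dominated vs E i \<longleftrightarrow> i < length vs \<and>
     in_nbr E (vs ! ((i + 1) mod length vs)) = closed_in_nbr E (vs ! i)"

definition remove_nth :: "nat \<Rightarrow> 'a list \<Rightarrow> 'a list" where
  "remove_nth i xs = take i xs @ drop (Suc i) xs"

definition dismantle_step :: "('a list \<times> ('a \<times> 'a) set) \<Rightarrow> ('a list \<times> ('a \<times> 'a) set) \<Rightarrow> bool" where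
  "dismantle_step G H \<longleftrightarrow> (\<exists>i. dominated (fst G) (snd G) i \<and>
     fst H = remove_nth i (fst G) \<and>
     snd H = snd G \<inter> (set (fst H) \<times> set (fst H)))"

definition dismantles_to :: "'a list \<Rightarrow> ('a \<times> 'a) set \<Rightarrow> 'a list \<Rightarrow> ('a \<times> 'a) set \<Rightarrow> bool" where
  "dismantles_to vs E ws F \<longleftrightarrow> dismantle_step\<^sup>*\<^sup>* (vs, E) (ws, F)"

definition circ :: "nat \<Rightarrow> nat \<Rightarrow> (nat \<times> nat) set" where
  "circ n k = {(i, j). i < n \<and> j < n \<and> 0 < (j + n - i) mod n \<and> (j + n - i) mod n \<le> k}"

definition digraph_iso :: "'a set \<Rightarrow> ('a \<times> 'a) set \<Rightarrow> 'b set \<Rightarrow> ('b \<times> 'b) set \<Rightarrow> bool" where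
  "digraph_iso V E W F \<longleftrightarrow> (\<exists>f. bij_betw f V W \<and>
     (\<forall>x\<in>V. \<forall>y\<in>V. (x, y) \<in> E \<longleftrightarrow> (f x, f y) \<in> F))"

end

theory Submission
  imports Defs
begin

definition sc :: "nat \<Rightarrow> nat \<Rightarrow> nat" where "sc n i = (if Suc i = n then 0 else Suc i)"
definition pd :: "nat \<Rightarrow> nat \<Rightarrow> nat" where "pd n j = (if j = 0 then n - 1 else j - 1)"
definition cyc3 :: "nat \<Rightarrow> nat \<Rightarrow> nat \<Rightarrow> bool" where
  "cyc3 a b c \<longleftrightarrow> (a < b \<and> b < c) \<or> (b < c \<and> c < a) \<or> (c < a \<and> a < b)"

definition INTV :: "'a list \<Rightarrow> ('a \<times> 'a) set \<Rightarrow> bool" where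
  "INTV vs E \<longleftrightarrow> (\<forall>a b c. a < length vs \<longrightarrow> b < length vs \<longrightarrow> c < length vs \<longrightarrow> cyc3 a b c \<longrightarrow>
     (vs!a, vs!c) \<in> E \<longrightarrow> (vs!a, vs!b) \<in> E \<and> (vs!b, vs!c) \<in> E)"

lemma mod_sc: "i < n \<Longrightarrow> (i + 1) mod n = sc n i"
  by (cases "Suc i = n") (auto simp: sc_def)

lemma mod_pd: "j < n \<Longrightarrow> (j + n - 1) mod n = pd n j"
proof (cases "j = 0")
  case True assume "j < n" then show ?thesis using True by (simp add: pd_def)
next
  case False assume j: "j < n"
  have "(j + n - 1) mod n = ((j - 1) + n) mod n"
    by (rule arg_cong[where f="\<lambda>x. x mod n"]) (use False in arith)
  also have "\<dots> = j - 1" using j by simp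
  finally show ?thesis using False by (simp add: pd_def)
qed

lemma mod_sc': "i < n \<Longrightarrow> Suc i mod n = sc n i"
  using mod_sc by simp

lemma mod_pd': "j < n \<Longrightarrow> (j + n - Suc 0) mod n = pd n j"
  using mod_pd by simp

lemma mod_diff: "(i::nat) < n \<Longrightarrow> j < n \<Longrightarrow> (j + n - i) mod n = (if i \<le> j then j - i else j + n - i)"
proof (cases "i \<le> j")
  case True assume "i < n" "j < n"
  have eq: "j + n - i = (j - i) + n" using True by arith
  have "(j + n - i) mod n = ((j - i) + n) mod n" by (simp only: eq)
  also have "\<dots> = j - i" using \<open>j<n\<close> by simp
  finally show ?thesis using True by simp
qed simp

lemma cyc_INT:
  assumes cg: "cyclic_graph vs E"
  shows "INTV vs E"
proof -
  define n where "n = length vs"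
  have cond: "\<And>i j. i < n \<Longrightarrow> j < n \<Longrightarrow> (vs!i, vs!j) \<in> E \<Longrightarrow> j = sc n i \<or>
      ((vs!i, vs!(pd n j)) \<in> E \<and> (vs!(sc n i), vs!j) \<in> E)"
    using cg unfolding cyclic_graph_def n_def by (simp add: mod_sc' mod_pd')
  define dst where "dst i j = (if i < j then j - i else j + n - i)" for i j
  have main: "\<forall>i j. i < n \<longrightarrow> j < n \<longrightarrow> dst i j = d \<longrightarrow> (vs!i, vs!j) \<in> E \<longrightarrow>
      (\<forall>b<n. cyc3 i b j \<longrightarrow> (vs!i, vs!b) \<in> E \<and> (vs!b, vs!j) \<in> E)" for d
  proof (induction d rule: less_induct)
    case (less d)
    show ?case
    proof (intro allI impI)
      fix i j b
      assume i: "i < n" and j: "j < n" and d: "dst i j = d" and e: "(vs!i, vs!j) \<in> E"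
        and b: "b < n" and c: "cyc3 i b j"
      have "j \<noteq> sc n i" using i j b c by (auto simp: sc_def cyc3_def)
      with cond[OF i j e] have E1: "(vs!i, vs!(pd n j)) \<in> E" and E2: "(vs!(sc n i), vs!j) \<in> E"
        by auto
      define p where "p = pd n j"
      define s where "s = sc n i"
      have p: "p < n" using j by (auto simp: p_def pd_def)
      have s: "s < n" using i by (auto simp: s_def sc_def)
      have dp: "dst i p < d" using i j b c d by (auto simp: p_def pd_def dst_def cyc3_def)
      have ds: "dst s j < d" using i j b c d by (auto simp: s_def sc_def dst_def cyc3_def)
      have IHp: "\<And>b'. b' < n \<Longrightarrow> cyc3 i b' p \<Longrightarrow> (vs!i, vs!b') \<in> E \<and> (vs!b', vs!p) \<in> E"
        using less.IH[OF dp] i p E1 p_def by blast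
      have IHs: "\<And>b'. b' < n \<Longrightarrow> cyc3 s b' j \<Longrightarrow> (vs!s, vs!b') \<in> E \<and> (vs!b', vs!j) \<in> E"
        using less.IH[OF ds] s j E2 s_def by blast
      show "(vs!i, vs!b) \<in> E \<and> (vs!b, vs!j) \<in> E"
      proof (cases "b = p")
        case True
        have "(vs!b, vs!j) \<in> E"
        proof (cases "p = s")
          case True thus ?thesis using E2 \<open>b = p\<close> s_def by simp
        next
          case False
          have "cyc3 s p j" using False i j b c \<open>b = p\<close>
            by (auto simp: s_def sc_def p_def pd_def cyc3_def split: if_splits)
          thus ?thesis using IHs p \<open>b = p\<close> by blast
        qed
        thus ?thesis using E1 True p_def by simp
      next
        case bp: False
        show ?thesis
        proof (cases "b = s")
          case True
          have "(vs!i, vs!b) \<in> E"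
          proof (cases "s = p")
            case True thus ?thesis using E1 \<open>b = s\<close> p_def by simp
          next
            case False
            have "cyc3 i s p" using False i j b c \<open>b = s\<close>
              by (auto simp: s_def sc_def p_def pd_def cyc3_def split: if_splits)
            thus ?thesis using IHp s \<open>b = s\<close> by blast
          qed
          thus ?thesis using E2 True s_def by simp
        next
          case False
          have "cyc3 i b p" "cyc3 s b j" using False bp i j b c
            by (auto simp: s_def sc_def p_def pd_def cyc3_def split: if_splits)
          thus ?thesis using IHp IHs b by blast
        qed
      qed
    qed
  qed
  show ?thesis unfolding INTV_def n_def[symmetric]
    using main dst_def by blast
qed

lemma INT_cyc:
  assumes d: "distinct vs" and g: "digraph (set vs) E" and I: "INTV vs E"
  shows "cyclic_graph vs E"
proof -
  define n where "n = length vs"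
  have "\<forall>i<n. \<forall>j<n. (vs!i, vs!j) \<in> E \<longrightarrow> j = sc n i \<or>
      ((vs!i, vs!(pd n j)) \<in> E \<and> (vs!(sc n i), vs!j) \<in> E)"
  proof (intro allI impI)
    fix i j assume i: "i < n" and j: "j < n" and e: "(vs!i, vs!j) \<in> E"
    show "j = sc n i \<or> ((vs!i, vs!(pd n j)) \<in> E \<and> (vs!(sc n i), vs!j) \<in> E)"
    proof (cases "j = sc n i")
      case False
      have "i \<noteq> j" using e g unfolding digraph_def by auto
      then have c1: "cyc3 i (pd n j) j" and c2: "cyc3 i (sc n i) j"
        using False i j by (auto simp: sc_def pd_def cyc3_def split: if_splits)
      have "pd n j < n" "sc n i < n" using i j by (auto simp: sc_def pd_def)
      then show ?thesis using I c1 c2 i j e unfolding INTV_def n_def by blast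
    qed simp
  qed
  then show ?thesis using d g unfolding cyclic_graph_def n_def[symmetric]
    by (simp add: mod_sc' mod_pd')
qed

lemma length_remove_nth: "m < length vs \<Longrightarrow> length (remove_nth m vs) = length vs - 1"
  by (simp add: remove_nth_def)

lemma nth_remove_nth: "m < length vs \<Longrightarrow> p < length vs - 1 \<Longrightarrow>
   remove_nth m vs ! p = vs ! (if p < m then p else Suc p)"
  by (auto simp: remove_nth_def nth_append)

lemma set_remove_nth: "set (remove_nth m vs) \<subseteq> set vs"
  unfolding remove_nth_def using set_take_subset set_drop_subset by fastforce

lemma distinct_remove_nth: "distinct vs \<Longrightarrow> distinct (remove_nth m vs)"
  unfolding remove_nth_def
  by (simp add: distinct_append set_take_disj_set_drop_if_distinct)

lemma INT_remove:
  assumes m: "m < length vs" and I: "INTV vs E"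
  shows "INTV (remove_nth m vs) (E \<inter> (set (remove_nth m vs) \<times> set (remove_nth m vs)))"
  unfolding INTV_def
proof (intro allI impI)
  fix a b c
  let ?w = "remove_nth m vs"
  define sg where "sg p = (if p < m then p else Suc p)" for p
  assume a: "a < length ?w" and b: "b < length ?w" and c: "c < length ?w" and cy: "cyc3 a b c"
    and e: "(?w!a, ?w!c) \<in> E \<inter> (set ?w \<times> set ?w)"
  have l: "length ?w = length vs - 1" using m by (rule length_remove_nth)
  have wa: "?w!a = vs!(sg a)" "?w!b = vs!(sg b)" "?w!c = vs!(sg c)"
    using a b c l m by (simp_all add: nth_remove_nth sg_def)
  have "sg a < length vs" "sg b < length vs" "sg c < length vs" "cyc3 (sg a) (sg b) (sg c)"
    using a b c l cy by (auto simp: sg_def cyc3_def)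
  then have "(vs!(sg a), vs!(sg b)) \<in> E \<and> (vs!(sg b), vs!(sg c)) \<in> E"
    using I e wa unfolding INTV_def by auto
  moreover have "?w!a \<in> set ?w" "?w!b \<in> set ?w" "?w!c \<in> set ?w" using a b c by auto
  ultimately show "(?w!a, ?w!b) \<in> E \<inter> (set ?w \<times> set ?w) \<and> (?w!b, ?w!c) \<in> E \<inter> (set ?w \<times> set ?w)"
    using wa by auto
qed

lemma cyc_remove:
  assumes cg: "cyclic_graph vs E" and m: "m < length vs"
  shows "cyclic_graph (remove_nth m vs) (E \<inter> (set (remove_nth m vs) \<times> set (remove_nth m vs)))"
proof (rule INT_cyc)
  show "distinct (remove_nth m vs)" using cg distinct_remove_nth unfolding cyclic_graph_def by blast
  show "digraph (set (remove_nth m vs)) (E \<inter> (set (remove_nth m vs) \<times> set (remove_nth m vs)))"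
    using cg unfolding cyclic_graph_def digraph_def by auto
  show "INTV (remove_nth m vs) (E \<inter> (set (remove_nth m vs) \<times> set (remove_nth m vs)))"
    by (rule INT_remove[OF m cyc_INT[OF cg]])
qed


lemma dc_interval:
  assumes pos: "\<forall>t\<in>S. 1 \<le> (t::nat)" and dc: "\<forall>t\<in>S. \<forall>t'. 1 \<le> t' \<longrightarrow> t' \<le> t \<longrightarrow> t' \<in> S"
    and fin: "finite S"
  shows "S = {1..card S}"
proof (cases "S = {}")
  case False
  define M where "M = Max S"
  have M: "M \<in> S" using False fin M_def by simp
  have "S = {1..M}"
  proof
    show "S \<subseteq> {1..M}" using pos fin M_def by auto
    show "{1..M} \<subseteq> S" using dc M by auto
  qed
  then show ?thesis by simp
qed simp

lemma part1:
  assumes cg: "cyclic_graph vs E" and ne: "vs \<noteq> []" and nd: "\<forall>i. \<not> dominated vs E i"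
  shows "\<exists>n k. 2 * k < n \<and> digraph_iso (set vs) E {0..<n} (circ n k)"
proof -
  define n where "n = length vs"
  have n0: "0 < n" using ne n_def by simp
  have dist: "distinct vs" and dg: "digraph (set vs) E" using cg unfolding cyclic_graph_def by auto
  have sub: "E \<subseteq> set vs \<times> set vs" and noloop: "\<And>v. (v,v) \<notin> E"
    and asym: "\<And>v w. (v,w) \<in> E \<Longrightarrow> (w,v) \<notin> E" using dg unfolding digraph_def by auto
  have I: "INTV vs E" by (rule cyc_INT[OF cg])
  have cond: "\<And>i j. i < n \<Longrightarrow> j < n \<Longrightarrow> (vs!i, vs!j) \<in> E \<Longrightarrow> j = sc n i \<or>
      ((vs!i, vs!(pd n j)) \<in> E \<and> (vs!(sc n i), vs!j) \<in> E)"
    using cg unfolding cyclic_graph_def n_def by (simp add: mod_sc' mod_pd')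
  define L where "L j = card (in_nbr E (vs!j))" for j
  have fin: "\<And>v. finite (in_nbr E v)"
    by (rule finite_subset[of _ "set vs"]) (use sub in \<open>auto simp: in_nbr_def\<close>)
  have S1: "\<And>j. j < n \<Longrightarrow> in_nbr E (vs!(sc n j)) \<subseteq> insert (vs!j) (in_nbr E (vs!j))"
  proof
    fix j w assume j: "j < n" and w: "w \<in> in_nbr E (vs!(sc n j))"
    then have e: "(w, vs!(sc n j)) \<in> E" by (simp add: in_nbr_def)
    then have "w \<in> set vs" using sub by auto
    then obtain i where i: "i < n" "w = vs!i" by (auto simp: in_set_conv_nth n_def)
    show "w \<in> insert (vs!j) (in_nbr E (vs!j))"
    proof (cases "i = j")
      case False
      have sj: "sc n j < n" using j by (simp add: sc_def)
      have "sc n j \<noteq> sc n i" using False i j by (auto simp: sc_def split: if_splits)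
      then have "(vs!i, vs!(pd n (sc n j))) \<in> E" using cond[OF i(1) sj] e i by auto
      moreover have "pd n (sc n j) = j" using j by (auto simp: sc_def pd_def)
      ultimately show ?thesis using i by (simp add: in_nbr_def)
    qed (use i in simp)
  qed
  have S2: "L (sc n j) \<le> L j" if j: "j < n" for j
  proof -
    have "in_nbr E (vs!(sc n j)) \<noteq> insert (vs!j) (in_nbr E (vs!j))"
      using nd j unfolding dominated_def closed_in_nbr_def n_def[symmetric] by (simp add: mod_sc')
    then have "in_nbr E (vs!(sc n j)) \<subset> insert (vs!j) (in_nbr E (vs!j))" using S1[OF j] by blast
    then have "L (sc n j) < card (insert (vs!j) (in_nbr E (vs!j)))"
      unfolding L_def by (intro psubset_card_mono) (auto simp: fin)
    also have "\<dots> = Suc (L j)" using noloop fin unfolding L_def by (simp add: in_nbr_def)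
    finally show "L (sc n j) \<le> L j" by simp
  qed
  have dec: "j' < n \<longrightarrow> L j' \<le> L j" if "j \<le> j'" for j j'
    using that
  proof (induction j' rule: dec_induct)
    case (step m)
    show ?case
    proof
      assume "Suc m < n"
      then have "sc n m = Suc m" by (simp add: sc_def)
      then have "L (Suc m) \<le> L m" using S2[of m] \<open>Suc m < n\<close> by simp
      with step \<open>Suc m < n\<close> show "L (Suc m) \<le> L j" by simp
    qed
  qed simp
  define k where "k = L 0"
  have Lc: "L j = k" if j: "j < n" for j
  proof -
    have "L j \<le> L 0" using dec[of 0 j] j by simp
    moreover have "sc n (n - 1) = 0" using n0 by (simp add: sc_def)
    then have "L 0 \<le> L (n - 1)" using S2[of "n - 1"] n0 by simp
    moreover have "L (n - 1) \<le> L j" using dec[of j "n - 1"] j n0 by simp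
    ultimately show ?thesis unfolding k_def by simp
  qed
  define bk where "bk j t = (if t \<le> j then j - t else j + n - t)" for j t
  have key: "{t. 1 \<le> t \<and> t < n \<and> (vs!(bk j t), vs!j) \<in> E} = {1..k}" if j: "j < n" for j
  proof -
    define T where "T = {t. 1 \<le> t \<and> t < n \<and> (vs!(bk j t), vs!j) \<in> E}"
    have finT: "finite T" by (rule finite_subset[of _ "{..<n}"]) (auto simp: T_def)
    have dc: "\<forall>t\<in>T. \<forall>t'. 1 \<le> t' \<longrightarrow> t' \<le> t \<longrightarrow> t' \<in> T"
    proof (intro ballI allI impI)
      fix t t' assume t: "t \<in> T" "1 \<le> t'" "t' \<le> t"
      show "t' \<in> T"
      proof (cases "t' = t")
        case False
        have "cyc3 (bk j t) (bk j t') j" using t False j by (auto simp: T_def bk_def cyc3_def)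
        moreover have "bk j t < n" "bk j t' < n" using t j by (auto simp: T_def bk_def)
        ultimately have "(vs!(bk j t'), vs!j) \<in> E" using I j t unfolding INTV_def T_def n_def by blast
        then show ?thesis using t unfolding T_def by auto
      qed (use t in simp)
    qed
    have T1: "T = {1..card T}" by (rule dc_interval) (use dc finT in \<open>auto simp: T_def\<close>)
    have bij: "bij_betw (\<lambda>t. vs!(bk j t)) T (in_nbr E (vs!j))"
      unfolding bij_betw_def
    proof
      show "inj_on (\<lambda>t. vs!(bk j t)) T"
      proof
        fix t1 t2 assume t: "t1 \<in> T" "t2 \<in> T" "vs!(bk j t1) = vs!(bk j t2)"
        have "bk j t1 < n" "bk j t2 < n" using t j by (auto simp: T_def bk_def)
        then have "bk j t1 = bk j t2" using t dist nth_eq_iff_index_eq n_def by metis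
        then show "t1 = t2" using t j by (auto simp: T_def bk_def split: if_splits)
      qed
      show "(\<lambda>t. vs!(bk j t)) ` T = in_nbr E (vs!j)"
      proof
        show "(\<lambda>t. vs!(bk j t)) ` T \<subseteq> in_nbr E (vs!j)" by (auto simp: T_def in_nbr_def)
        show "in_nbr E (vs!j) \<subseteq> (\<lambda>t. vs!(bk j t)) ` T"
        proof
          fix w assume w: "w \<in> in_nbr E (vs!j)"
          then have e: "(w, vs!j) \<in> E" by (simp add: in_nbr_def)
          then have "w \<in> set vs" using sub by auto
          then obtain i where i: "i < n" "w = vs!i" by (auto simp: in_set_conv_nth n_def)
          have ij: "i \<noteq> j" using e i noloop by auto
          define t where "t = (if i \<le> j then j - i else j + n - i)"
          have "bk j t = i" "1 \<le> t" "t < n" using i j ij by (auto simp: t_def bk_def)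
          then show "w \<in> (\<lambda>t. vs!(bk j t)) ` T" using e i unfolding T_def by force
        qed
      qed
    qed
    have "card T = L j" using bij_betw_same_card[OF bij] L_def by simp
    then show ?thesis using T1 Lc[OF j] T_def by simp
  qed
  have edge: "(vs!i, vs!j) \<in> E \<longleftrightarrow> (0 < (j + n - i) mod n \<and> (j + n - i) mod n \<le> k)"
    if i: "i < n" and j: "j < n" for i j
  proof (cases "i = j")
    case True then show ?thesis using noloop by simp
  next
    case False
    define t where "t = (if i \<le> j then j - i else j + n - i)"
    have tm: "(j + n - i) mod n = t" using mod_diff[OF i j] t_def by simp
    have "bk j t = i" "1 \<le> t" "t < n" using i j False by (auto simp: t_def bk_def)
    then have "(vs!i, vs!j) \<in> E \<longleftrightarrow> t \<in> {t. 1 \<le> t \<and> t < n \<and> (vs!(bk j t), vs!j) \<in> E}" by simp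
    also have "\<dots> \<longleftrightarrow> t \<in> {1..k}" using key[OF j] by simp
    finally show ?thesis using tm \<open>1 \<le> t\<close> by auto
  qed
  have kn: "2 * k < n"
  proof (rule ccontr)
    assume c: "\<not> 2 * k < n"
    then have k1: "1 \<le> k" using n0 by simp
    then have "k \<in> {1..k}" by simp
    then have kn: "k < n" using key[OF n0] by blast
    have "(vs!0, vs!k) \<in> E" using edge[OF n0 kn] k1 kn by simp
    moreover have "(vs!k, vs!0) \<in> E" using edge[OF kn n0] k1 kn c by (simp add: mod_diff)
    ultimately show False using asym by blast
  qed
  define f where "f = the_inv_into {0..<n} ((!) vs)"
  have bn: "bij_betw ((!) vs) {0..<n} (set vs)" by (rule bij_betw_nth) (auto simp: dist n_def)
  have bf: "bij_betw f (set vs) {0..<n}" unfolding f_def by (rule bij_betw_the_inv_into[OF bn])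
  have ff: "x \<in> set vs \<Longrightarrow> vs!(f x) = x" for x
    unfolding f_def by (rule f_the_inv_into_f_bij_betw[OF bn])
  have fl: "x \<in> set vs \<Longrightarrow> f x < n" for x using bf bij_betwE by fastforce
  have "digraph_iso (set vs) E {0..<n} (circ n k)"
    unfolding digraph_iso_def
  proof (intro exI conjI ballI)
    show "bij_betw f (set vs) {0..<n}" by (rule bf)
    fix x y assume x: "x \<in> set vs" and y: "y \<in> set vs"
    have "(x, y) \<in> E \<longleftrightarrow> (vs!(f x), vs!(f y)) \<in> E" using ff x y by simp
    also have "\<dots> \<longleftrightarrow> (f x, f y) \<in> circ n k" using edge[OF fl[OF x] fl[OF y]] fl x y
      by (simp add: circ_def)
    finally show "(x, y) \<in> E \<longleftrightarrow> (f x, f y) \<in> circ n k" .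
  qed
  then show ?thesis using kn by blast
qed

lemma part2:
  "cyclic_graph vs E \<Longrightarrow> vs \<noteq> [] \<Longrightarrow> \<exists>ws F n k. dismantles_to vs E ws F \<and> 2 * k < n \<and>
            digraph_iso (set ws) F {0..<n} (circ n k)"
proof (induction "length vs" arbitrary: vs E rule: less_induct)
  case less
  show ?case
  proof (cases "\<exists>i. dominated vs E i")
    case False
    then obtain n k where "2 * k < n \<and> digraph_iso (set vs) E {0..<n} (circ n k)"
      using part1 less.prems by blast
    then show ?thesis unfolding dismantles_to_def by blast
  next
    case True
    then obtain i where d: "dominated vs E i" by blast
    have i: "i < length vs" using d unfolding dominated_def by auto
    have noloop: "\<And>v. (v,v) \<notin> E" using less.prems unfolding cyclic_graph_def digraph_def by auto
    have l1: "length vs \<noteq> 1"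
    proof
      assume l: "length vs = 1"
      then have "i = 0" using i by simp
      have "in_nbr E (vs ! ((i + 1) mod length vs)) = closed_in_nbr E (vs!i)"
        using d unfolding dominated_def by blast
      moreover have "(i + 1) mod length vs = 0" using l by simp
      ultimately have "vs!0 \<in> in_nbr E (vs!0)" using \<open>i = 0\<close> unfolding closed_in_nbr_def
        by (metis insertI1)
      then have "(vs!0, vs!0) \<in> E" unfolding in_nbr_def by blast
      then show False using noloop by blast
    qed
    define ws where "ws = remove_nth i vs"
    define F where "F = E \<inter> (set ws \<times> set ws)"
    have step: "dismantle_step (vs, E) (ws, F)" unfolding dismantle_step_def using d ws_def F_def by auto
    have lw: "length ws < length vs" "ws \<noteq> []"
      using length_remove_nth[OF i] i l1 ws_def by auto
    have "cyclic_graph ws F" using cyc_remove[OF less.prems(1) i] ws_def F_def by simp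
    from less.hyps[OF lw(1) this lw(2)] obtain ws' F' n k where
      "dismantles_to ws F ws' F' \<and> 2 * k < n \<and> digraph_iso (set ws') F' {0..<n} (circ n k)" by blast
    then show ?thesis using step unfolding dismantles_to_def by (meson converse_rtranclp_into_rtranclp)
  qed
qed

theorem proposition3p12:
  fixes vs :: "'a list" and E :: "('a \<times> 'a) set"
  assumes "cyclic_graph vs E" and "vs \<noteq> []"
  shows "((\<forall>i. \<not> dominated vs E i) \<longrightarrow>
            (\<exists>n k. 2 * k < n \<and> digraph_iso (set vs) E {0..<n} (circ n k)))
       \<and> (\<exists>ws F n k. dismantles_to vs E ws F \<and> 2 * k < n \<and>
            digraph_iso (set ws) F {0..<n} (circ n k))"
  using part1[OF assms] part2[OF assms] by blast

end
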